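(* Let $\mathcal{Q}$ be a quantum query algorithm making $p(n)$ queries to an oracle acting on an $n$-qubit query register, and fix an initial state. For an $n$-qubit pure state $|\psi\rangle$, let $|\Phi^f_\psi\rangle$ be the final state (before measurement) of $\mathcal{Q}$ run from this initial state with oracle $U_\psi=\mathbb{1}-2|\psi\rangle\langle\psi|$. Then there exists a subspace $S$ of the $n$-qubit Hilbert space of dimension $2^{n/2}$ containing $|\psi\rangle$ such that, if $|\Phi^f_S\rangle$ is the final state of $\mathcal{Q}$ run from the same initial state with oracle $U_S=\mathbb{1}-2\Pi_S$ ($\Pi_S$ the orthogonal projector onto $S$), then $\big\||\Phi^f_\psi\rangle-|\Phi^f_S\rangle\big\|_2\le 2p(n)\cdot2^{-n/6}$.
   Context: A quantum query algorithm alternates fixed unitaries on its registers with applications of the oracle to a designated $n$-qubit query register (tensored with identity elsewhere). $n$ is assumed even. *)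

theory Defs
  imports Complex_Main "Jordan_Normal_Form.Matrix"
begin

text \<open>The full system consists of an n-qubit query register (dimension 2^n) and a
 w-qubit workspace (dimension 2^w); a basis index k of the full system
 corresponds to query index k div 2^w and workspace index k mod 2^w,
 i.e. the full space is the tensor product (query register) (x) (workspace).\<close>

definition cinner :: "complex vec \<Rightarrow> complex vec \<Rightarrow> complex" where
  "cinner u v = (\<Sum>i<dim_vec v. cnj (u $ i) * v $ i)"

definition vnorm :: "complex vec \<Rightarrow> real" where
  "vnorm v = sqrt (\<Sum>i<dim_vec v. (cmod (v $ i))\<^sup>2)"

definition adjoint_mat :: "complex mat \<Rightarrow> complex mat" where
  "adjoint_mat U = mat (dim_col U) (dim_row U) (\<lambda>(i,j). cnj (U $$ (j,i)))"

definition unitary_mat :: "nat \<Rightarrow> complex mat \<Rightarrow> bool" where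
  "unitary_mat d U \<longleftrightarrow> U \<in> carrier_mat d d \<and> U * adjoint_mat U = 1\<^sub>m d \<and> adjoint_mat U * U = 1\<^sub>m d"

definition proj_onto :: "nat \<Rightarrow> complex vec list \<Rightarrow> complex mat" where
  "proj_onto d bs = mat d d (\<lambda>(i,j). (\<Sum>b\<leftarrow>bs. b $ i * cnj (b $ j)))"

definition orthonormal_list :: "nat \<Rightarrow> complex vec list \<Rightarrow> bool" where
  "orthonormal_list d bs \<longleftrightarrow> (\<forall>b\<in>set bs. dim_vec b = d) \<and>
     (\<forall>k<length bs. \<forall>l<length bs. cinner (bs ! k) (bs ! l) = (if k = l then 1 else 0))"

definition in_span :: "complex vec \<Rightarrow> complex vec list \<Rightarrow> bool" where
  "in_span v bs \<longleftrightarrow> (\<exists>c :: nat \<Rightarrow> complex. \<forall>i<dim_vec v. v $ i = (\<Sum>k<length bs. c k * (bs ! k) $ i))"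

definition refl_oracle :: "nat \<Rightarrow> complex vec list \<Rightarrow> complex mat" where
  "refl_oracle d bs = 1\<^sub>m d - 2 \<cdot>\<^sub>m proj_onto d bs"

definition state_oracle :: "nat \<Rightarrow> complex vec \<Rightarrow> complex mat" where
  "state_oracle d \<psi> = refl_oracle d [\<psi>]"

text \<open>Oracle O on the n-qubit query register, tensored with the identity on the
 w-qubit workspace.\<close>
definition lift_oracle :: "nat \<Rightarrow> nat \<Rightarrow> complex mat \<Rightarrow> complex mat" where
  "lift_oracle n w Orc = mat (2^n * 2^w) (2^n * 2^w)
     (\<lambda>(i,j). if i mod 2^w = j mod 2^w then Orc $$ (i div 2^w, j div 2^w) else 0)"

text \<open>Running the algorithm: after the first unitary, each subsequent unitary is
 preceded by one oracle call. With unitaries U0 and Us the algorithm makes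
 length Us queries.\<close>
fun run_alg :: "complex mat \<Rightarrow> complex mat list \<Rightarrow> complex vec \<Rightarrow> complex vec" where
  "run_alg Oe [] x = x"
| "run_alg Oe (U # Us) x = run_alg Oe Us (U *\<^sub>v (Oe *\<^sub>v x))"

definition final_state :: "nat \<Rightarrow> nat \<Rightarrow> complex mat \<Rightarrow> complex mat list \<Rightarrow> complex mat \<Rightarrow> complex vec \<Rightarrow> complex vec" where
  "final_state n w U0 Us Orc init = run_alg (lift_oracle n w Orc) Us (U0 *\<^sub>v init)"

end

theory Submission
  imports Defs "HOL-Analysis.L2_Norm"
begin

definition ip :: "nat \<Rightarrow> (nat \<Rightarrow> complex) \<Rightarrow> (nat \<Rightarrow> complex) \<Rightarrow> complex" where
  "ip N u f = (\<Sum>i<N. cnj (u i) * f i)"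

definition ON :: "(nat \<Rightarrow> nat \<Rightarrow> complex) \<Rightarrow> nat set \<Rightarrow> nat \<Rightarrow> bool" where
  "ON B K N \<longleftrightarrow> (\<forall>k\<in>K. \<forall>l\<in>K. ip N (B k) (B l) = (if k = l then 1 else 0))"

lemma cross:
  assumes "ON B K N" "finite K"
  shows "(\<Sum>i<N. cnj (\<Sum>k\<in>K. c k * B k i) * (\<Sum>l\<in>K. d l * B l i)) = (\<Sum>k\<in>K. cnj (c k) * d k)"
proof -
  have "(\<Sum>i<N. cnj (\<Sum>k\<in>K. c k * B k i) * (\<Sum>l\<in>K. d l * B l i))
     = (\<Sum>i<N. \<Sum>k\<in>K. \<Sum>l\<in>K. cnj (c k) * d l * (cnj (B k i) * B l i))"
    by (simp add: sum_distrib_left sum_distrib_right mult_ac)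
  also have "\<dots> = (\<Sum>k\<in>K. \<Sum>l\<in>K. cnj (c k) * d l * ip N (B k) (B l))"
    unfolding ip_def sum_distrib_left
    by (subst sum.swap, rule sum.cong, simp, subst sum.swap, simp)
  also have "\<dots> = (\<Sum>k\<in>K. \<Sum>l\<in>K. if k = l then cnj (c k) * d l else 0)"
    using assms(1) unfolding ON_def by (intro sum.cong refl) auto
  also have "\<dots> = (\<Sum>k\<in>K. cnj (c k) * d k)"
    using assms(2) by (simp add: sum.delta)
  finally show ?thesis .
qed

lemma piece1:
  "(\<Sum>i<N. cnj (f i) * (\<Sum>k\<in>K. c k * B k i)) = (\<Sum>k\<in>K. c k * cnj (ip N (B k) f))"
  unfolding ip_def sum_distrib_left
  by (subst sum.swap) (simp add: sum_distrib_left mult_ac)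

lemma piece2:
  "(\<Sum>i<N. cnj (\<Sum>k\<in>K. c k * B k i) * f i) = (\<Sum>k\<in>K. cnj (c k) * ip N (B k) f)"
  unfolding ip_def sum_distrib_left sum_distrib_right
  by (subst sum.swap) (simp add: sum_distrib_left mult_ac)

definition nsq :: "nat \<Rightarrow> (nat \<Rightarrow> complex) \<Rightarrow> real" where
  "nsq N f = (\<Sum>i<N. (cmod (f i))\<^sup>2)"

lemma cnorm_sq: "complex_of_real ((cmod z)\<^sup>2) = cnj z * z"
  by (metis complex_norm_square mult.commute)

lemma cnorm_sq': "(complex_of_real (cmod z))\<^sup>2 = cnj z * z"
  by (metis cnorm_sq of_real_power)

lemma nsq_c: "complex_of_real (nsq N f) = (\<Sum>i<N. cnj (f i) * f i)"
  unfolding nsq_def of_real_sum by (simp add: cnorm_sq')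

lemma nsq_nonneg: "nsq N f \<ge> 0"
  unfolding nsq_def by (simp add: sum_nonneg)

lemma expand_diff:
  "(\<Sum>i<N. cnj (f i - a * P i) * (f i - a * P i)) =
   (\<Sum>i<N. cnj (f i) * f i) - a * (\<Sum>i<N. cnj (f i) * P i) - cnj a * (\<Sum>i<N. cnj (P i) * f i)
    + cnj a * a * (\<Sum>i<N. cnj (P i) * P i)"
  by (simp add: algebra_simps sum.distrib sum_subtractf sum_distrib_left)

lemma ortho_facts:
  fixes f :: "nat \<Rightarrow> complex"
  assumes "ON B K N" "finite K"
  and c_def: "c = (\<lambda>k. ip N (B k) f)"
  and P_def: "P = (\<lambda>i. (\<Sum>k\<in>K. c k * B k i))"
  shows "(\<Sum>i<N. cnj (f i) * P i) = complex_of_real (\<Sum>k\<in>K. (cmod (c k))\<^sup>2)"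
    and "(\<Sum>i<N. cnj (P i) * f i) = complex_of_real (\<Sum>k\<in>K. (cmod (c k))\<^sup>2)"
    and "(\<Sum>i<N. cnj (P i) * P i) = complex_of_real (\<Sum>k\<in>K. (cmod (c k))\<^sup>2)"
proof -
  have e: "complex_of_real (\<Sum>k\<in>K. (cmod (c k))\<^sup>2) = (\<Sum>k\<in>K. cnj (c k) * c k)"
    unfolding of_real_sum by (simp add: cnorm_sq')
  show "(\<Sum>i<N. cnj (f i) * P i) = complex_of_real (\<Sum>k\<in>K. (cmod (c k))\<^sup>2)"
    unfolding e P_def piece1 by (simp add: c_def mult.commute)
  show "(\<Sum>i<N. cnj (P i) * f i) = complex_of_real (\<Sum>k\<in>K. (cmod (c k))\<^sup>2)"
    unfolding e P_def piece2 by (simp add: c_def mult.commute)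
  show "(\<Sum>i<N. cnj (P i) * P i) = complex_of_real (\<Sum>k\<in>K. (cmod (c k))\<^sup>2)"
    unfolding e P_def by (rule cross[OF assms(1,2)])
qed

lemma bessel:
  assumes "ON B K N" "finite K"
  shows "(\<Sum>k\<in>K. (cmod (ip N (B k) f))\<^sup>2) \<le> nsq N f"
proof -
  define c where "c = (\<lambda>k. ip N (B k) f)"
  define P where "P = (\<lambda>i. (\<Sum>k\<in>K. c k * B k i))"
  note o = ortho_facts[OF assms c_def P_def]
  have "complex_of_real (nsq N (\<lambda>i. f i - 1 * P i)) = 
        complex_of_real (nsq N f - (\<Sum>k\<in>K. (cmod (c k))\<^sup>2))"
    unfolding of_real_diff nsq_c expand_diff o by simp
  hence "nsq N (\<lambda>i. f i - 1 * P i) = nsq N f - (\<Sum>k\<in>K. (cmod (c k))\<^sup>2)"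
    using of_real_eq_iff by blast
  with nsq_nonneg[of N "\<lambda>i. f i - 1 * P i"] show ?thesis unfolding c_def by linarith
qed

lemma refl_norm:
  assumes "ON B K N" "finite K"
  shows "nsq N (\<lambda>i. f i - 2 * (\<Sum>k\<in>K. ip N (B k) f * B k i)) = nsq N f"
proof -
  define c where "c = (\<lambda>k. ip N (B k) f)"
  define P where "P = (\<lambda>i. (\<Sum>k\<in>K. c k * B k i))"
  note o = ortho_facts[OF assms c_def P_def]
  have "complex_of_real (nsq N (\<lambda>i. f i - 2 * P i)) = complex_of_real (nsq N f)"
    unfolding nsq_c expand_diff o by simp
  hence "nsq N (\<lambda>i. f i - 2 * P i) = nsq N f"
    using of_real_eq_iff by blast
  thus ?thesis unfolding P_def c_def .
qed

lemma pyth: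
  assumes "ON B K N" "finite K"
  shows "nsq N (\<lambda>i. (\<Sum>k\<in>K. ip N (B k) f * B k i)) = (\<Sum>k\<in>K. (cmod (ip N (B k) f))\<^sup>2)"
proof -
  define c where "c = (\<lambda>k. ip N (B k) f)"
  define P where "P = (\<lambda>i. (\<Sum>k\<in>K. c k * B k i))"
  note o = ortho_facts[OF assms c_def P_def]
  have "complex_of_real (nsq N P) = complex_of_real (\<Sum>k\<in>K. (cmod (c k))\<^sup>2)"
    unfolding nsq_c o(3) by simp
  hence "nsq N P = (\<Sum>k\<in>K. (cmod (c k))\<^sup>2)"
    using of_real_eq_iff by blast
  thus ?thesis unfolding P_def c_def .
qed

definition hh :: "(nat \<Rightarrow> complex) \<Rightarrow> real \<Rightarrow> nat \<Rightarrow> nat \<Rightarrow> complex" where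
  "hh v c k i = (if k = i then 1 else 0) - complex_of_real c * v i * cnj (v k)"

lemma hh_on:
  assumes s: "(\<Sum>i<N. cnj (v i) * v i) = complex_of_real s" and "s \<noteq> 0" and "k < N" "l < N"
  shows "ip N (hh v (2/s) k) (hh v (2/s) l) = (if k = l then 1 else 0)"
proof -
  define c where "c = complex_of_real (2/s)"
  have cc: "cnj c = c" unfolding c_def by simp
  have cs: "c * c * complex_of_real s = 2 * c" unfolding c_def using assms(2)
    by (simp add: field_simps)
  have "ip N (hh v (2/s) k) (hh v (2/s) l) =
     (\<Sum>i<N. (if k = i then 1 else 0) * (if l = i then 1 else 0)
       - c * (v i * (if k = i then cnj (v l) else 0))
       - c * (cnj (v i) * (if l = i then v k else 0))
       + c * c * v k * cnj (v l) * (cnj (v i) * v i))"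
    unfolding ip_def hh_def c_def[symmetric]
    by (intro sum.cong refl) (auto simp: cc algebra_simps)
  also have "\<dots> = (\<Sum>i<N. (if k = i then 1 else 0) * (if l = i then 1 else 0))
       - (\<Sum>i<N. c * (v i * (if k = i then cnj (v l) else 0)))
       - (\<Sum>i<N. c * (cnj (v i) * (if l = i then v k else 0)))
       + (\<Sum>i<N. c * c * v k * cnj (v l) * (cnj (v i) * v i))"
    by (simp only: sum.distrib sum_subtractf)
  also have "\<dots> = (if k = l then 1 else 0) - c * v k * cnj (v l) - c * cnj (v l) * v k
       + c * c * v k * cnj (v l) * complex_of_real s"
  proof -
    have 1: "(\<Sum>i<N. (if k = i then 1 else 0) * (if l = i then 1 else 0)) = (if k = l then 1 else (0::complex))"
      using assms(3,4) by (simp add: if_distrib[of "\<lambda>x. x * _"] cong: if_cong)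
    have 2: "(\<Sum>i<N. c * (v i * (if k = i then cnj (v l) else 0))) = c * v k * cnj (v l)"
    proof -
      have "(\<Sum>i<N. c * (v i * (if k = i then cnj (v l) else 0))) = (\<Sum>i<N. if k = i then c * v k * cnj (v l) else 0)"
        by (intro sum.cong refl) auto
      thus ?thesis using assms(3) by simp
    qed
    have 3: "(\<Sum>i<N. c * (cnj (v i) * (if l = i then v k else 0))) = c * cnj (v l) * v k"
    proof -
      have "(\<Sum>i<N. c * (cnj (v i) * (if l = i then v k else 0))) = (\<Sum>i<N. if l = i then c * cnj (v l) * v k else 0)"
        by (intro sum.cong refl) auto
      thus ?thesis using assms(4) by simp
    qed
    have 4: "(\<Sum>i<N. c * c * v k * cnj (v l) * (cnj (v i) * v i)) = c * c * v k * cnj (v l) * complex_of_real s"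
      by (simp add: sum_distrib_left[symmetric] s)
    show ?thesis unfolding 1 2 3 4 ..
  qed
  also have "\<dots> = (if k = l then 1 else 0)"
  proof -
    have e: "c * c * v k * cnj (v l) * complex_of_real s = (c*c*complex_of_real s) * (v k * cnj (v l))"
      by (simp add: mult_ac)
    show ?thesis unfolding e cs by (simp add: algebra_simps)
  qed
  finally show ?thesis .
qed

lemma ip_cnj: "ip N g f = cnj (ip N f g)"
  unfolding ip_def by (simp add: mult.commute)

lemma basis_exists:
  assumes n1: "nsq N \<psi> = 1" and N1: "N \<ge> 1"
  shows "\<exists>B. ON B {..<N} N \<and> B 0 = \<psi>"
proof -
  define a where "a = cmod (\<psi> 0)"
  define u where "u = (if \<psi> 0 = 0 then 1 else \<psi> 0 / complex_of_real a)"
  have a0: "a \<ge> 0" unfolding a_def by simp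
  have psi0: "\<psi> 0 = u * complex_of_real a"
    unfolding u_def a_def by auto
  have uu: "cnj u * u = 1"
  proof (cases "\<psi> 0 = 0")
    case True thus ?thesis unfolding u_def by simp
  next
    case False
    hence "a \<noteq> 0" unfolding a_def by simp
    hence "cnj u * u = cnj (\<psi> 0) * \<psi> 0 / complex_of_real (a^2)"
      unfolding u_def using False by (simp add: power2_eq_square)
    also have "\<dots> = 1" unfolding a_def cnorm_sq[symmetric] using False by simp
    finally show ?thesis .
  qed
  define v where "v = (\<lambda>i. (if i = 0 then u else 0) + \<psi> i)"
  define s where "s = 2 + 2 * a"
  have s0: "s \<noteq> 0" unfolding s_def using a0 by simp
  obtain N' where N': "N = Suc N'" using N1 by (cases N) auto
  have tot: "(\<Sum>i<N. cnj (\<psi> i) * \<psi> i) = 1"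
    using n1 nsq_c[of N \<psi>] by simp
  have tot': "(\<Sum>i<N'. cnj (\<psi> (Suc i)) * \<psi> (Suc i)) = 1 - cnj (\<psi> 0) * \<psi> 0"
    using tot unfolding N' sum.lessThan_Suc_shift by (metis add_diff_cancel_left')
  have p00: "cnj (\<psi> 0) * \<psi> 0 = complex_of_real (a^2)"
    unfolding a_def using cnorm_sq by metis
  have vv: "(\<Sum>i<N. cnj (v i) * v i) = complex_of_real s"
  proof -
    have "(\<Sum>i<N. cnj (v i) * v i) = cnj (v 0) * v 0 + (\<Sum>i<N'. cnj (\<psi> (Suc i)) * \<psi> (Suc i))"
      unfolding N' sum.lessThan_Suc_shift by (simp add: v_def)
    also have "cnj (v 0) * v 0 = (cnj u * u) * (1 + complex_of_real a)^2"
      unfolding v_def psi0 by (simp add: power2_eq_square algebra_simps)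
    finally show ?thesis unfolding tot' uu p00 s_def by (simp add: power2_eq_square algebra_simps)
  qed
  define B where "B = (\<lambda>k. if k = 0 then \<psi> else hh v (2/s) k)"
  have orth: "ip N \<psi> (hh v (2/s) l) = 0" if "0 < l" "l < N" for l
  proof -
    have "ip N \<psi> (hh v (2/s) l) = (\<Sum>i<N. (if l = i then cnj (\<psi> l) else 0)) 
        - complex_of_real (2/s) * cnj (v l) * (\<Sum>i<N. cnj (\<psi> i) * v i)"
    proof -
      have "ip N \<psi> (hh v (2/s) l) = (\<Sum>i<N. (if l = i then cnj (\<psi> l) else 0)
          - complex_of_real (2/s) * cnj (v l) * (cnj (\<psi> i) * v i))"
        unfolding ip_def hh_def by (intro sum.cong refl) (auto simp: algebra_simps)
      thus ?thesis by (simp only: sum_subtractf sum_distrib_left)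
    qed
    also have "(\<Sum>i<N. cnj (\<psi> i) * v i) = cnj (\<psi> 0) * u + 1"
    proof -
      have "(\<Sum>i<N. cnj (\<psi> i) * v i) = (\<Sum>i<N. if i = 0 then cnj (\<psi> 0) * u else 0) + (\<Sum>i<N. cnj (\<psi> i) * \<psi> i)"
        unfolding v_def sum.distrib[symmetric] by (intro sum.cong refl) (auto simp: algebra_simps)
      thus ?thesis using tot N1 by simp
    qed
    also have "cnj (\<psi> 0) * u = complex_of_real a"
      unfolding psi0 using uu by (simp add: mult.commute mult.left_commute)
    also have "cnj (v l) = cnj (\<psi> l)" unfolding v_def using that by simp
    finally have "ip N \<psi> (hh v (2/s) l) = cnj (\<psi> l) - complex_of_real (2/s) * (complex_of_real a + 1) * cnj (\<psi> l)"
      using that by (simp add: mult_ac)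
    also have "complex_of_real (2/s) * (complex_of_real a + 1) = 1"
    proof -
      have "(2/s) * (a + 1) = 1" unfolding s_def using a0 by (simp add: field_simps)
      hence "complex_of_real ((2/s) * (a + 1)) = 1" by simp
      thus ?thesis by simp
    qed
    finally show ?thesis by simp
  qed
  have "ON B {..<N} N"
    unfolding ON_def
  proof (intro ballI)
    fix k l assume k: "k \<in> {..<N}" and l: "l \<in> {..<N}"
    show "ip N (B k) (B l) = (if k = l then 1 else 0)"
    proof (cases "k = 0"; cases "l = 0")
      assume "k = 0" "l = 0" thus ?thesis unfolding B_def ip_def using tot by simp
    next
      assume "k = 0" "l \<noteq> 0" thus ?thesis unfolding B_def using orth l by simp
    next
      assume "k \<noteq> 0" "l = 0" thus ?thesis unfolding B_def using orth[of k] k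
        by (simp add: ip_cnj[of N "hh v (2/s) k"])
    next
      assume "k \<noteq> 0" "l \<noteq> 0" thus ?thesis unfolding B_def using hh_on[OF vv s0] k l by simp
    qed
  qed
  thus ?thesis unfolding B_def by auto
qed

lemma sum_split2: "(\<Sum>k<N*W. g k) = (\<Sum>i<N. \<Sum>j<W. g (i*W + j))" for N W :: nat
proof -
  have "(\<Sum>k<N*W. g k) = (\<Sum>i<N. sum g {i*W..<i*W+W})"
    using sum.nat_group[where g=g and k=W and n=N] by simp
  also have "\<dots> = (\<Sum>i<N. \<Sum>j<W. g (i*W + j))"
  proof -
    have "sum g {i*W..<i*W+W} = (\<Sum>j<W. g (i*W + j))" for i
    proof -
      have "sum g {0 + i*W..<W + i*W} = (\<Sum>j\<in>{0..<W}. g (j + i*W))"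
        by (rule sum.shift_bounds_nat_ivl)
      thus ?thesis by (simp add: add.commute atLeast0LessThan)
    qed
    thus ?thesis by simp
  qed
  finally show ?thesis .
qed

lemma vnorm_nsq: "vnorm v = sqrt (nsq (dim_vec v) (\<lambda>i. v $ i))"
  unfolding vnorm_def nsq_def ..

lemma vnorm_L2: "vnorm v = L2_set (\<lambda>i. cmod (v $ i)) {..<dim_vec v}"
  unfolding vnorm_def L2_set_def ..

lemma vnorm_add: assumes "dim_vec x = dim_vec y" shows "vnorm (x + y) \<le> vnorm x + vnorm y"
proof -
  have "vnorm (x + y) = L2_set (\<lambda>i. cmod (x $ i + y $ i)) {..<dim_vec y}"
    unfolding vnorm_L2 using assms by (intro L2_set_cong) auto
  also have "\<dots> \<le> L2_set (\<lambda>i. cmod (x $ i) + cmod (y $ i)) {..<dim_vec y}"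
    by (intro L2_set_mono norm_triangle_ineq) auto
  also have "\<dots> \<le> vnorm x + vnorm y"
    unfolding vnorm_L2 using assms by (simp add: L2_set_triangle_ineq)
  finally show ?thesis .
qed

lemma vnorm_tri:
  assumes "dim_vec x = n" "dim_vec y = n" "dim_vec z = n"
  shows "vnorm (x - z) \<le> vnorm (x - y) + vnorm (y - z)"
proof -
  have "x - z = (x - y) + (y - z)" using assms by (intro eq_vecI) auto
  hence "vnorm (x - z) = vnorm ((x - y) + (y - z))" by simp
  also have "\<dots> \<le> vnorm (x - y) + vnorm (y - z)" using assms by (intro vnorm_add) auto
  finally show ?thesis .
qed

lemma vnorm_nonneg: "vnorm v \<ge> 0" unfolding vnorm_def by (simp add: sum_nonneg)

lemma vnorm_zero: "vnorm (x - x) = 0" unfolding vnorm_def by simp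

lemma unitary_norm:
  assumes U: "unitary_mat M U" and x: "dim_vec x = M"
  shows "vnorm (U *\<^sub>v x) = vnorm x" "dim_vec (U *\<^sub>v x) = M"
proof -
  have Uc: "U \<in> carrier_mat M M" and UU: "adjoint_mat U * U = 1\<^sub>m M"
    using U unfolding unitary_mat_def by auto
  show "dim_vec (U *\<^sub>v x) = M" using Uc by simp
  have e: "(\<Sum>k<M. cnj (U $$ (k,l)) * U $$ (k,l')) = (if l = l' then 1 else 0)"
    if "l < M" "l' < M" for l l'
  proof -
    have "(adjoint_mat U * U) $$ (l,l') = (\<Sum>k<M. cnj (U $$ (k,l)) * U $$ (k,l'))"
      using Uc that unfolding adjoint_mat_def
      by (simp add: scalar_prod_def atLeast0LessThan)
    thus ?thesis using UU that by simp
  qed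
  have "complex_of_real (nsq M (\<lambda>i. (U *\<^sub>v x) $ i)) = (\<Sum>k<M. cnj (\<Sum>l<M. U $$ (k,l) * x $ l) * (\<Sum>l'<M. U $$ (k,l') * x $ l'))"
    unfolding nsq_c using Uc x by (intro sum.cong refl) (simp add: scalar_prod_def atLeast0LessThan mult.commute)
  also have "\<dots> = (\<Sum>k<M. \<Sum>l<M. \<Sum>l'<M. cnj (x $ l) * x $ l' * (cnj (U $$ (k,l)) * U $$ (k,l')))"
    by (simp add: sum_distrib_left sum_distrib_right mult_ac)
  also have "\<dots> = (\<Sum>l<M. \<Sum>l'<M. cnj (x $ l) * x $ l' * (\<Sum>k<M. cnj (U $$ (k,l)) * U $$ (k,l')))"
    unfolding sum_distrib_left
    by (subst sum.swap, rule sum.cong, simp, subst sum.swap, simp)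
  also have "\<dots> = (\<Sum>l<M. \<Sum>l'<M. if l = l' then cnj (x $ l) * x $ l' else 0)"
    by (intro sum.cong refl) (simp add: e)
  also have "\<dots> = complex_of_real (nsq M (\<lambda>i. x $ i))"
    unfolding nsq_c by simp
  finally have "nsq M (\<lambda>i. (U *\<^sub>v x) $ i) = nsq M (\<lambda>i. x $ i)"
    using of_real_eq_iff by blast
  thus "vnorm (U *\<^sub>v x) = vnorm x" unfolding vnorm_nsq using Uc x by simp
qed

definition col :: "nat \<Rightarrow> complex vec \<Rightarrow> nat \<Rightarrow> nat \<Rightarrow> complex" where
  "col W x j = (\<lambda>i. x $ (i*W + j))"

lemma divmod_simps: "j < W \<Longrightarrow> (i*W + j) div W = i" "j < W \<Longrightarrow> (i*W + j) mod (W::nat) = j"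
  by auto

lemma delta_mult: "i < N \<Longrightarrow> (\<Sum>i'<N. (if i = i' then 1 else 0) * f i') = (f i :: complex)" for N :: nat
proof -
  assume "i < N"
  have "(\<Sum>i'<N. (if i = i' then 1 else 0) * f i') = (\<Sum>i'<N. if i = i' then f i' else 0)"
    by (intro sum.cong) auto
  also have "\<dots> = (if i \<in> {..<N} then f i else 0)" by (rule sum.delta') simp
  finally show ?thesis using \<open>i < N\<close> by simp
qed

lemma lift_refl:
  assumes x: "dim_vec x = 2^n * 2^w"
  shows "lift_oracle n w (refl_oracle (2^n) bs) *\<^sub>v x = vec (2^n * 2^w) (\<lambda>k. x $ k -
     2 * (\<Sum>l<length bs. (bs!l) $ (k div 2^w) * ip (2^n) (\<lambda>i. bs!l $ i) (col (2^w) x (k mod 2^w))))"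
proof (rule eq_vecI)
  define N :: nat where "N = 2^n"
  define W :: nat where "W = 2^w"
  have W0: "W > 0" unfolding W_def by simp
  show "dim_vec (lift_oracle n w (refl_oracle (2^n) bs) *\<^sub>v x) = dim_vec (vec (2^n * 2^w) (\<lambda>k. x $ k -
     2 * (\<Sum>l<length bs. (bs!l) $ (k div 2^w) * ip (2^n) (\<lambda>i. bs!l $ i) (col (2^w) x (k mod 2^w)))))"
    unfolding lift_oracle_def by simp
  fix k assume "k < dim_vec (vec (2^n * 2^w) (\<lambda>k. x $ k -
     2 * (\<Sum>l<length bs. (bs!l) $ (k div 2^w) * ip (2^n) (\<lambda>i. bs!l $ i) (col (2^w) x (k mod 2^w)))))"
  hence k: "k < N * W" unfolding N_def W_def by simp
  define i where "i = k div W"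
  define j where "j = k mod W"
  have i: "i < N" unfolding i_def using k W0 by (simp add: less_mult_imp_div_less)
  have j: "j < W" unfolding j_def using W0 by simp
  have kij: "k = i * W + j" unfolding i_def j_def by simp
  define R where "R = (\<lambda>a b. (if a = b then 1 else 0) - 2 * (\<Sum>l<length bs. (bs!l) $ a * cnj ((bs!l) $ b)))"
  have Rent: "refl_oracle N bs $$ (a,b) = R a b" if "a < N" "b < N" for a b
    unfolding refl_oracle_def proj_onto_def R_def using that
    by (simp add: sum_list_sum_nth atLeast0LessThan)
  have "(lift_oracle n w (refl_oracle (2^n) bs) *\<^sub>v x) $ k =
      (\<Sum>k'<N*W. (if k mod W = k' mod W then refl_oracle N bs $$ (k div W, k' div W) else 0) * x $ k')"
    using k x unfolding lift_oracle_def N_def W_def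
    by (simp add: scalar_prod_def atLeast0LessThan)
  also have "\<dots> = (\<Sum>i'<N. \<Sum>j'<W. (if j = j' then R i i' * x $ (i'*W + j) else 0))"
    unfolding sum_split2 using i j Rent by (intro sum.cong refl) (auto simp: divmod_simps i_def[symmetric] j_def[symmetric])
  also have "\<dots> = (\<Sum>i'<N. R i i' * x $ (i'*W + j))"
    using j by simp
  also have "\<dots> = (\<Sum>i'<N. (if i = i' then x $ (i'*W+j) else 0)) 
       - 2 * (\<Sum>i'<N. \<Sum>l<length bs. (bs!l) $ i * (cnj ((bs!l) $ i') * x $ (i'*W + j)))"
  proof -
    have "R i i' * x $ (i'*W + j) = (if i = i' then x $ (i'*W+j) else 0)
       - 2 * (\<Sum>l<length bs. (bs!l) $ i * (cnj ((bs!l) $ i') * x $ (i'*W + j)))" for i'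
      unfolding R_def by (simp add: left_diff_distrib right_diff_distrib sum_distrib_right sum_distrib_left mult_ac)
    thus ?thesis by (simp add: sum_subtractf sum_distrib_left)
  qed
  also have "\<dots> = x $ k - 2 * (\<Sum>l<length bs. (bs!l) $ i * ip N (\<lambda>a. bs!l $ a) (col W x j))"
  proof -
    have t1: "(\<Sum>i'<N. (if i = i' then x $ (i'*W+j) else 0)) = x $ k"
      using i kij by (simp add: sum.delta')
    have t2: "(\<Sum>i'<N. \<Sum>l<length bs. (bs!l) $ i * (cnj ((bs!l) $ i') * x $ (i'*W + j)))
        = (\<Sum>l<length bs. (bs!l) $ i * ip N (\<lambda>a. bs!l $ a) (col W x j))"
      unfolding ip_def col_def sum_distrib_left by (rule sum.swap)
    show ?thesis unfolding t1 t2 ..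
  qed
  finally show "(lift_oracle n w (refl_oracle (2^n) bs) *\<^sub>v x) $ k = vec (2^n * 2^w) (\<lambda>k. x $ k -
     2 * (\<Sum>l<length bs. (bs!l) $ (k div 2^w) * ip (2^n) (\<lambda>i. bs!l $ i) (col (2^w) x (k mod 2^w)))) $ k"
    using k unfolding i_def j_def N_def W_def by simp
qed

lemma ON_list: assumes "orthonormal_list N bs"
  shows "ON (\<lambda>l i. bs!l $ i) {..<length bs} N"
  using assms unfolding orthonormal_list_def ON_def ip_def cinner_def by auto

lemma nsq_split: "nsq (N*W) h = (\<Sum>j<W. nsq N (\<lambda>i. h (i*W+j)))" for N W :: nat
  unfolding nsq_def sum_split2 by (rule sum.swap)

lemma nsq_cong: "(\<And>i. i < N \<Longrightarrow> f i = g i) \<Longrightarrow> nsq N f = nsq N g"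
  unfolding nsq_def by simp

lemma vnorm_vec: "vnorm (vec M f) = sqrt (nsq M f)"
  unfolding vnorm_nsq dim_vec using nsq_cong[of M "\<lambda>i. vec M f $ i" f] by simp

lemma lift_norm:
  assumes on: "orthonormal_list (2^n) bs" and x: "dim_vec x = 2^n * 2^w"
  shows "vnorm (lift_oracle n w (refl_oracle (2^n) bs) *\<^sub>v x) = vnorm x"
    "dim_vec (lift_oracle n w (refl_oracle (2^n) bs) *\<^sub>v x) = 2^n * 2^w"
proof -
  define N :: nat where "N = 2^n"
  define W :: nat where "W = 2^w"
  note ON = ON_list[OF on, folded N_def]
  show "dim_vec (lift_oracle n w (refl_oracle (2^n) bs) *\<^sub>v x) = 2^n * 2^w"
    unfolding lift_oracle_def by simp
  have "nsq (N*W) (\<lambda>k. x $ k - 2 * (\<Sum>l<length bs. (bs!l) $ (k div W) * ip N (\<lambda>i. bs!l $ i) (col W x (k mod W))))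
     = (\<Sum>j<W. nsq N (\<lambda>i. col W x j i - 2 * (\<Sum>l\<in>{..<length bs}. ip N (\<lambda>i. bs!l $ i) (col W x j) * (bs!l $ i))))"
    unfolding nsq_split by (intro sum.cong refl nsq_cong) (simp add: col_def mult.commute)
  also have "\<dots> = (\<Sum>j<W. nsq N (col W x j))"
    by (intro sum.cong refl refl_norm[OF ON]) simp
  also have "\<dots> = nsq (N*W) (\<lambda>k. x $ k)"
    unfolding nsq_split col_def ..
  finally have e: "nsq (N*W) (\<lambda>k. x $ k - 2 * (\<Sum>l<length bs. (bs!l) $ (k div W) * ip N (\<lambda>i. bs!l $ i) (col W x (k mod W))))
    = nsq (N*W) (\<lambda>k. x $ k)" .
  show "vnorm (lift_oracle n w (refl_oracle (2^n) bs) *\<^sub>v x) = vnorm x"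
    unfolding lift_refl[OF x] vnorm_vec using e unfolding N_def W_def by (simp add: vnorm_nsq x)
qed

lemma lift_diff:
  assumes x: "dim_vec x = 2^n * 2^w"
  shows "lift_oracle n w (state_oracle (2^n) \<psi>) *\<^sub>v x - lift_oracle n w (refl_oracle (2^n) (\<psi> # g)) *\<^sub>v x
   = vec (2^n * 2^w) (\<lambda>k. 2 * (\<Sum>l<length g. (g!l) $ (k div 2^w) * ip (2^n) (\<lambda>i. g!l $ i) (col (2^w) x (k mod 2^w))))"
  unfolding state_oracle_def lift_refl[OF x]
  by (rule eq_vecI) (simp_all del: sum.lessThan_Suc add: sum.lessThan_Suc_shift algebra_simps)

lemma nsq_scale: "nsq N (\<lambda>i. c * f i) = (cmod c)^2 * nsq N f"
  unfolding nsq_def by (simp add: sum_distrib_left norm_mult power_mult_distrib)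

lemma diff_norm:
  assumes on: "orthonormal_list (2^n) g"
  shows "vnorm (vec (2^n * 2^w) (\<lambda>k. 2 * (\<Sum>l<length g. (g!l) $ (k div 2^w) * ip (2^n) (\<lambda>i. g!l $ i) (col (2^w) x (k mod 2^w)))))
    = 2 * sqrt (\<Sum>j<2^w. \<Sum>l<length g. (cmod (ip (2^n) (\<lambda>i. g!l $ i) (col (2^w) x j)))\<^sup>2)"
proof -
  define N :: nat where "N = 2^n"
  define W :: nat where "W = 2^w"
  note ON = ON_list[OF on, folded N_def]
  have "nsq (N*W) (\<lambda>k. 2 * (\<Sum>l<length g. (g!l) $ (k div W) * ip N (\<lambda>i. g!l $ i) (col W x (k mod W))))
     = (\<Sum>j<W. nsq N (\<lambda>i. 2 * (\<Sum>l\<in>{..<length g}. ip N (\<lambda>i. g!l $ i) (col W x j) * (g!l $ i))))"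
    unfolding nsq_split by (intro sum.cong refl nsq_cong) (simp add: col_def mult.commute)
  also have "\<dots> = (\<Sum>j<W. 4 * (\<Sum>l<length g. (cmod (ip N (\<lambda>i. g!l $ i) (col W x j)))\<^sup>2))"
    unfolding nsq_scale by (intro sum.cong refl) (simp add: pyth[OF ON])
  finally have e: "nsq (N*W) (\<lambda>k. 2 * (\<Sum>l<length g. (g!l) $ (k div W) * ip N (\<lambda>i. g!l $ i) (col W x (k mod W))))
     = 4 * (\<Sum>j<W. (\<Sum>l<length g. (cmod (ip N (\<lambda>i. g!l $ i) (col W x j)))\<^sup>2))"
    by (simp add: sum_distrib_left)
  show ?thesis unfolding vnorm_vec using e unfolding N_def W_def
    by (simp add: real_sqrt_mult)
qed

lemma onl_map:
  assumes ON: "ON B K N" and L: "distinct L" and inj: "inj_on \<sigma> (set L)" and sub: "\<sigma> ` set L \<subseteq> K"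
  shows "orthonormal_list N (map (\<lambda>l. vec N (B (\<sigma> l))) L)"
  unfolding orthonormal_list_def
proof (intro conjI ballI allI impI)
  fix b assume "b \<in> set (map (\<lambda>l. vec N (B (\<sigma> l))) L)"
  thus "dim_vec b = N" by auto
next
  fix k l assume k: "k < length (map (\<lambda>l. vec N (B (\<sigma> l))) L)" and l: "l < length (map (\<lambda>l. vec N (B (\<sigma> l))) L)"
  have kl: "L!k \<in> set L" "L!l \<in> set L" using k l by auto
  have eq: "\<sigma> (L!k) = \<sigma> (L!l) \<longleftrightarrow> k = l"
    using inj kl k l L by (auto simp: inj_on_eq_iff nth_eq_iff_index_eq)
  have "cinner (map (\<lambda>l. vec N (B (\<sigma> l))) L ! k) (map (\<lambda>l. vec N (B (\<sigma> l))) L ! l) = ip N (B (\<sigma> (L!k))) (B (\<sigma> (L!l)))"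
    unfolding cinner_def ip_def using k l by simp
  also have "\<dots> = (if k = l then 1 else 0)"
  proof -
    have "\<sigma> (L!k) \<in> K" "\<sigma> (L!l) \<in> K" using sub kl by auto
    thus ?thesis using ON unfolding ON_def eq[symmetric] by auto
  qed
  finally show "cinner (map (\<lambda>l. vec N (B (\<sigma> l))) L ! k) (map (\<lambda>l. vec N (B (\<sigma> l))) L ! l) = (if k = l then 1 else 0)" .
qed

lemma cs_step: fixes a B p :: real assumes "0 \<le> a" "0 \<le> B" "0 \<le> p"
  shows "sqrt a + sqrt (p*B) \<le> sqrt ((1+p)*(a+B))"
proof -
  have "2 * (sqrt (p*a) * sqrt B) \<le> p*a + B"
  proof -
    have "0 \<le> (sqrt (p*a) - sqrt B)^2" by simp
    thus ?thesis using assms by (simp add: power2_eq_square algebra_simps)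
  qed
  hence "(sqrt a + sqrt (p*B))^2 \<le> (1+p)*(a+B)"
    using assms by (simp add: power2_eq_square algebra_simps real_sqrt_mult)
  thus ?thesis using assms by (simp add: real_le_rsqrt)
qed

fun acc :: "(complex vec \<Rightarrow> real) \<Rightarrow> complex mat \<Rightarrow> complex mat list \<Rightarrow> complex vec \<Rightarrow> real" where
  "acc F Or [] x = 0"
| "acc F Or (U # Us) x = F x + acc F Or Us (U *\<^sub>v (Or *\<^sub>v x))"

lemma acc_mono:
  assumes "P x" "\<And>y. P y \<Longrightarrow> F y \<le> G y" "\<And>y U. P y \<Longrightarrow> U \<in> set Us \<Longrightarrow> P (U *\<^sub>v (Or *\<^sub>v y))"
  shows "acc F Or Us x \<le> acc G Or Us x"
  using assms by (induction Us arbitrary: x) (auto intro: add_mono)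

lemma acc_eq:
  assumes "P x" "\<And>y. P y \<Longrightarrow> F y = G y" "\<And>y U. P y \<Longrightarrow> U \<in> set Us \<Longrightarrow> P (U *\<^sub>v (Or *\<^sub>v y))"
  shows "acc F Or Us x = acc G Or Us x"
  using assms by (induction Us arbitrary: x) auto

lemma acc_sum: "acc (\<lambda>y. \<Sum>m\<in>A. F m y) Or Us x = (\<Sum>m\<in>A. acc (F m) Or Us x)"
  by (induction Us arbitrary: x) (auto simp: sum.distrib)

lemma acc_cmult: "acc (\<lambda>y. c * F y) Or Us x = c * acc F Or Us x"
  by (induction Us arbitrary: x) (auto simp: algebra_simps)

lemma acc_const: "acc (\<lambda>y. c) Or Us x = c * length Us"
  by (induction Us arbitrary: x) (auto simp: algebra_simps)

lemma acc_nonneg: "(\<And>y. F y \<ge> 0) \<Longrightarrow> acc F Or Us x \<ge> 0"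
  by (induction Us arbitrary: x) (auto intro: add_nonneg_nonneg)

lemma acc_cs:
  assumes "\<And>y. F y \<ge> 0"
  shows "acc (\<lambda>y. sqrt (F y)) Or Us x \<le> sqrt (real (length Us) * acc F Or Us x)"
proof (induction Us arbitrary: x)
  case Nil thus ?case by simp
next
  case (Cons U Us)
  have "acc (\<lambda>y. sqrt (F y)) Or (U # Us) x \<le> sqrt (F x) + sqrt (real (length Us) * acc F Or Us (U *\<^sub>v (Or *\<^sub>v x)))"
    using Cons.IH by simp
  also have "\<dots> \<le> sqrt ((1 + real (length Us)) * (F x + acc F Or Us (U *\<^sub>v (Or *\<^sub>v x))))"
    by (rule cs_step) (auto intro: assms acc_nonneg)
  finally show ?case by simp
qed

lemma hybrid:
  assumes Us: "\<forall>U\<in>set Us. unitary_mat M U"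
    and Or': "Or' \<in> carrier_mat M M" and Or'n: "\<And>y. dim_vec y = M \<Longrightarrow> vnorm (Or' *\<^sub>v y) = vnorm y"
    and Or: "Or \<in> carrier_mat M M"
    and x: "dim_vec x = M" and x': "dim_vec x' = M"
  shows "vnorm (run_alg Or Us x - run_alg Or' Us x') \<le> vnorm (x - x') + acc (\<lambda>y. vnorm (Or *\<^sub>v y - Or' *\<^sub>v y)) Or Us x"
  using Us x x'
proof (induction Us arbitrary: x x')
  case Nil thus ?case by simp
next
  case (Cons U Us)
  have U: "unitary_mat M U" using Cons.prems(1) by simp
  have Uc: "U \<in> carrier_mat M M" using U unfolding unitary_mat_def by blast
  have xc: "x \<in> carrier_vec M" "x' \<in> carrier_vec M" using Cons.prems(2,3) by (auto intro: carrier_vecI)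
  have d1: "Or *\<^sub>v x \<in> carrier_vec M" using Or xc(1) by (rule mult_mat_vec_carrier)
  have d2: "Or' *\<^sub>v x' \<in> carrier_vec M" using Or' xc(2) by (rule mult_mat_vec_carrier)
  have d3: "Or' *\<^sub>v x \<in> carrier_vec M" using Or' xc(1) by (rule mult_mat_vec_carrier)
  have e1: "dim_vec (U *\<^sub>v (Or *\<^sub>v x)) = M" "dim_vec (U *\<^sub>v (Or' *\<^sub>v x')) = M" using Uc by simp_all
  have Us': "\<forall>U\<in>set Us. unitary_mat M U" using Cons.prems(1) by simp
  have "vnorm (run_alg Or (U#Us) x - run_alg Or' (U#Us) x') = vnorm (run_alg Or Us (U *\<^sub>v (Or *\<^sub>v x)) - run_alg Or' Us (U *\<^sub>v (Or' *\<^sub>v x')))"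
    by simp
  also have "\<dots> \<le> vnorm (U *\<^sub>v (Or *\<^sub>v x) - U *\<^sub>v (Or' *\<^sub>v x'))
      + acc (\<lambda>y. vnorm (Or *\<^sub>v y - Or' *\<^sub>v y)) Or Us (U *\<^sub>v (Or *\<^sub>v x))"
    by (rule Cons.IH[OF Us' e1])
  also have "U *\<^sub>v (Or *\<^sub>v x) - U *\<^sub>v (Or' *\<^sub>v x') = U *\<^sub>v (Or *\<^sub>v x - Or' *\<^sub>v x')"
    by (rule mult_minus_distrib_mat_vec[OF Uc d1 d2, symmetric])
  also have "vnorm (U *\<^sub>v (Or *\<^sub>v x - Or' *\<^sub>v x')) = vnorm (Or *\<^sub>v x - Or' *\<^sub>v x')"
    by (rule unitary_norm(1)[OF U]) (use d1 d2 Or' in simp)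
  also have "vnorm (Or *\<^sub>v x - Or' *\<^sub>v x') \<le> vnorm (Or *\<^sub>v x - Or' *\<^sub>v x) + vnorm (Or' *\<^sub>v x - Or' *\<^sub>v x')"
    by (rule vnorm_tri[of _ M]) (use Or Or' in simp_all)
  also have "Or' *\<^sub>v x - Or' *\<^sub>v x' = Or' *\<^sub>v (x - x')"
    by (rule mult_minus_distrib_mat_vec[OF Or' xc(1) xc(2), symmetric])
  also have "vnorm (Or' *\<^sub>v (x - x')) = vnorm (x - x')"
    by (rule Or'n) (use xc in simp)
  finally show ?case by simp
qed

lemma final_arith:
  fixes p :: real and n :: nat
  assumes "even n" "p \<ge> 0"
  shows "2 * sqrt (p * (p / (real (2^(n div 2)) + 1))) \<le> 2 * p * 2 powr (- real n / 6)"
proof -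
  define D :: real where "D = real (2^(n div 2))"
  have Dp: "D = 2 powr (real n / 2)"
    using assms(1) unfolding D_def by (auto simp: powr_realpow[symmetric] elim!: evenE)
  have "2 powr (real n / 6) \<le> 2 powr (real n / 4)" by (intro powr_mono) auto
  also have "2 powr (real n / 4) = sqrt D"
    unfolding Dp by (simp add: powr_half_sqrt[symmetric] powr_powr)
  also have "sqrt D \<le> sqrt (D + 1)" by simp
  finally have le: "2 powr (real n / 6) \<le> sqrt (D + 1)" .
  have pp: "0 < (2::real) powr (real n / 6)" by (simp only: powr_gt_zero)
  have Dpos: "D + 1 > 0" unfolding D_def by (rule add_nonneg_pos) simp_all
  have "sqrt (p * (p / (D + 1))) = p / sqrt (D + 1)"
    using assms(2) Dpos by (simp add: real_sqrt_mult real_sqrt_divide)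
  also have "\<dots> \<le> p / 2 powr (real n / 6)"
    by (rule divide_left_mono[OF le assms(2)]) (intro mult_pos_pos real_sqrt_gt_zero Dpos pp)
  also have "\<dots> = p * 2 powr (- real n / 6)"
  proof -
    have e1: "- real n / 6 = - (real n / 6)" by simp
    show ?thesis by (subst e1, subst powr_minus, simp only: divide_inverse)
  qed
  finally have "sqrt (p * (p / (D + 1))) \<le> p * 2 powr (- real n / 6)" .
  hence "2 * sqrt (p * (p / (D + 1))) \<le> 2 * (p * 2 powr (- real n / 6))"
    by (rule mult_left_mono) simp
  thus ?thesis unfolding D_def[symmetric] by (simp only: mult.assoc)
qed

lemma group_sum:
  fixes D N :: nat
  assumes "N = D*D" "D \<ge> 1"
  shows "(\<Sum>m<D+1. \<Sum>r<D-1. F (m*(D-1)+r+1)) = (\<Sum>k\<in>{1..<N}. F k)"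
proof -
  have "(\<Sum>m<D+1. \<Sum>r<D-1. F (m*(D-1)+r+1)) = (\<Sum>k<(D+1)*(D-1). F (k+1))"
    using sum_split2[where N="D+1" and W="D-1" and g="\<lambda>k. F (k+1)"] by simp
  also have "(D+1)*(D-1) = N - 1" using assms
    by (simp add: algebra_simps diff_mult_distrib2)
  also have "(\<Sum>k<N-1. F (k+1)) = (\<Sum>k\<in>{0+1..<(N-1)+1}. F k)"
    by (subst sum.shift_bounds_nat_ivl) (simp add: atLeast0LessThan)
  also have "(N-1)+1 = N" using assms by simp
  finally show ?thesis by simp
qed

lemma group_bound:
  fixes D m l :: nat
  assumes "D \<ge> 1" "m \<le> D" "l < D"
  shows "m*(D-1) + l < D*D"
proof -
  have "m*(D-1) \<le> D*(D-1)" using assms by simp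
  moreover have "D*(D-1) + D = D*D" using assms by (simp add: algebra_simps diff_mult_distrib2)
  ultimately show ?thesis using assms by linarith
qed

lemma ip_vec: "ip N (\<lambda>i. vec N h $ i) f = ip N h f"
  unfolding ip_def by (intro sum.cong refl) simp

lemma ON_sub: "ON B K N \<Longrightarrow> K' \<subseteq> K \<Longrightarrow> ON B K' N"
  unfolding ON_def by blast

lemma vnorm_sq: "(vnorm y)\<^sup>2 = nsq (dim_vec y) (\<lambda>i. y $ i)"
  unfolding vnorm_nsq using nsq_nonneg by simp

theorem mainTheorem4:
  fixes n w :: nat and U0 :: "complex mat" and Us :: "complex mat list"
    and init \<psi> :: "complex vec"
  assumes "even n"
    and "unitary_mat (2^n * 2^w) U0"
    and "\<forall>U\<in>set Us. unitary_mat (2^n * 2^w) U"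
    and "init \<in> carrier_vec (2^n * 2^w)" and "vnorm init = 1"
    and "\<psi> \<in> carrier_vec (2^n)" and "vnorm \<psi> = 1"
  shows "\<exists>bs. orthonormal_list (2^n) bs \<and> length bs = 2^(n div 2) \<and> in_span \<psi> bs \<and>
           vnorm (final_state n w U0 Us (state_oracle (2^n) \<psi>) init
                  - final_state n w U0 Us (refl_oracle (2^n) bs) init)
             \<le> 2 * real (length Us) * 2 powr (- real n / 6)"
proof -
  note ev = assms(1) and U0 = assms(2) and Us = assms(3) and initc = assms(4) and initn = assms(5)
    and psic = assms(6) and psin = assms(7)
  define D :: nat where "D = 2^(n div 2)"
  have ND: "(2::nat)^n = D*D"
  proof -
    obtain k where k: "n = 2*k" using ev by (auto elim!: evenE)
    hence "n div 2 = k" by simp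
    hence "D = 2^k" unfolding D_def by simp
    thus ?thesis unfolding k by (simp only: mult_2 power_add)
  qed
  have D1: "D \<ge> 1" unfolding D_def by (rule one_le_power) simp
  have N1: "(2::nat)^n \<ge> 1" by (rule one_le_power) simp
  have dpsi: "dim_vec \<psi> = 2^n" using psic by (rule carrier_vecD)
  have nsq1: "nsq (2^n) (\<lambda>i. \<psi> $ i) = 1"
  proof -
    have "sqrt (nsq (2^n) (\<lambda>i. \<psi> $ i)) = 1" using psin unfolding vnorm_nsq dpsi .
    thus ?thesis by simp
  qed
  obtain B where B: "ON B {..<2^n} (2^n)" and B0: "B 0 = (\<lambda>i. \<psi> $ i)"
    using basis_exists[OF nsq1 N1] by blast
  have psi_eq: "vec (2^n) (B 0) = \<psi>"
    by (rule eq_vecI) (simp_all add: B0 dpsi)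
  define \<sigma> where "\<sigma> = (\<lambda>m l. if l = 0 then 0 else m*(D-1) + (l::nat))"
  define g where "g = (\<lambda>m. map (\<lambda>l. vec (2^n) (B (\<sigma> m l))) [1..<D])"
  define bs where "bs = (\<lambda>m. \<psi> # g m)"
  have bs_map: "bs m = map (\<lambda>l. vec (2^n) (B (\<sigma> m l))) [0..<D]" for m
  proof -
    have "[0..<D] = 0 # [1..<D]" using D1 by (simp add: upt_rec)
    thus ?thesis unfolding bs_def g_def using psi_eq by (simp add: \<sigma>_def)
  qed
  have sig_inj: "inj_on (\<sigma> m) (set [0..<D])" for m
    unfolding \<sigma>_def by (rule inj_onI) (auto split: if_splits)
  have sig_rng: "\<sigma> m ` set [0..<D] \<subseteq> {..<2^n}" if "m \<le> D" for m
  proof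
    fix k assume "k \<in> \<sigma> m ` set [0..<D]"
    then obtain l where l: "l < D" "k = \<sigma> m l" by auto
    show "k \<in> {..<2^n}"
    proof (cases "l = 0")
      case True thus ?thesis using l N1 unfolding \<sigma>_def by simp
    next
      case False thus ?thesis using l group_bound[OF D1 that l(1)] unfolding \<sigma>_def ND by simp
    qed
  qed
  have onbs: "orthonormal_list (2^n) (bs m)" if "m \<le> D" for m
    unfolding bs_map by (rule onl_map[OF B distinct_upt sig_inj sig_rng[OF that]])
  have ong: "orthonormal_list (2^n) (g m)" if "m \<le> D" for m
    unfolding g_def
  proof (rule onl_map[OF B])
    show "inj_on (\<sigma> m) (set [1..<D])" using sig_inj[of m] by (rule inj_on_subset) auto
    show "\<sigma> m ` set [1..<D] \<subseteq> {..<2^n}" using sig_rng[OF that] by (rule subset_trans[rotated]) auto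
  qed simp
  have onpsi: "orthonormal_list (2^n) [\<psi>]"
  proof -
    have "orthonormal_list (2^n) (map (\<lambda>l. vec (2^n) (B (id l))) [0])"
      by (rule onl_map[OF B]) auto
    thus ?thesis using psi_eq by simp
  qed
  have lenbs: "length (bs m) = D" for m unfolding bs_map by simp
  have span: "in_span \<psi> (bs m)" for m
    unfolding in_span_def
  proof (intro exI allI impI)
    fix i assume "i < dim_vec \<psi>"
    have "(\<Sum>k<length (bs m). (if k = 0 then 1 else 0) * bs m ! k $ i) = bs m ! 0 $ i"
      using lenbs[of m] D1 by (simp add: if_distrib[of "\<lambda>x. x * _"] cong: if_cong)
    thus "\<psi> $ i = (\<Sum>k<length (bs m). (if k = 0 then 1 else 0) * bs m ! k $ i)"
      unfolding bs_def by simp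
  qed
  define Opsi where "Opsi = lift_oracle n w (state_oracle (2^n) \<psi>)"
  define OS where "OS = (\<lambda>m. lift_oracle n w (refl_oracle (2^n) (bs m)))"
  define E where "E = (\<lambda>m y. \<Sum>j<2^w. \<Sum>l<length (g m). (cmod (ip (2^n) (\<lambda>i. g m ! l $ i) (col (2^w) y j)))\<^sup>2)"
  have Enn: "E m y \<ge> 0" for m y unfolding E_def by (intro sum_nonneg) simp
  have diffE: "vnorm (Opsi *\<^sub>v y - OS m *\<^sub>v y) = 2 * sqrt (E m y)" if "m \<le> D" "dim_vec y = 2^n*2^w" for m y
    unfolding Opsi_def OS_def bs_def lift_diff[OF that(2)] diff_norm[OF ong[OF that(1)]] E_def ..
  have Eform: "E m y = (\<Sum>j<2^w. \<Sum>r<D-1. (cmod (ip (2^n) (B (m*(D-1)+r+1)) (col (2^w) y j)))\<^sup>2)" for m y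
  proof -
    have gl: "g m ! r = vec (2^n) (B (m*(D-1)+r+1))" if "r \<in> {..<D-1}" for r
      using that unfolding g_def \<sigma>_def by simp
    have lg: "length (g m) = D - 1" unfolding g_def by simp
    show ?thesis unfolding E_def lg
      by (intro sum.cong refl) (simp only: gl ip_vec)
  qed
  have Esum: "(\<Sum>m<D+1. E m y) \<le> (vnorm y)\<^sup>2" if "dim_vec y = 2^n*2^w" for y
  proof -
    have "(\<Sum>m<D+1. E m y) = (\<Sum>j<2^w. \<Sum>m<D+1. \<Sum>r<D-1. (cmod (ip (2^n) (B (m*(D-1)+r+1)) (col (2^w) y j)))\<^sup>2)"
      unfolding Eform by (rule sum.swap)
    also have "\<dots> = (\<Sum>j<2^w. \<Sum>k\<in>{1..<2^n}. (cmod (ip (2^n) (B k) (col (2^w) y j)))\<^sup>2)"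
      by (intro sum.cong refl group_sum[OF ND D1])
    also have "\<dots> \<le> (\<Sum>j<2^w. nsq (2^n) (col (2^w) y j))"
      by (intro sum_mono bessel ON_sub[OF B]) auto
    also have "\<dots> = nsq (2^n*2^w) (\<lambda>k. y $ k)" unfolding nsq_split col_def ..
    also have "\<dots> = (vnorm y)\<^sup>2" unfolding vnorm_sq that ..
    finally show ?thesis .
  qed
  define P where "P = (\<lambda>y. dim_vec y = 2^n*2^w \<and> vnorm y = 1)"
  have Opsi_c: "Opsi \<in> carrier_mat (2^n*2^w) (2^n*2^w)" unfolding Opsi_def lift_oracle_def by simp
  have OS_c: "OS m \<in> carrier_mat (2^n*2^w) (2^n*2^w)" for m unfolding OS_def lift_oracle_def by simp
  have Opsi_n: "vnorm (Opsi *\<^sub>v y) = vnorm y" "dim_vec (Opsi *\<^sub>v y) = 2^n*2^w" if "dim_vec y = 2^n*2^w" for y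
    unfolding Opsi_def state_oracle_def using lift_norm[OF onpsi that] by auto
  have pres: "P (U *\<^sub>v (Opsi *\<^sub>v y))" if "P y" "U \<in> set Us" for y U
  proof -
    have U: "unitary_mat (2^n*2^w) U" using Us that(2) by blast
    show ?thesis using that(1) unfolding P_def using unitary_norm[OF U Opsi_n(2)] Opsi_n by auto
  qed
  define x0 where "x0 = U0 *\<^sub>v init"
  have dinit: "dim_vec init = 2^n*2^w" using initc by (rule carrier_vecD)
  have Px0: "P x0" unfolding P_def x0_def using unitary_norm[OF U0 dinit] initn by simp
  have accsum: "(\<Sum>m<D+1. acc (E m) Opsi Us x0) \<le> real (length Us)"
  proof -
    have "(\<Sum>m<D+1. acc (E m) Opsi Us x0) = acc (\<lambda>y. \<Sum>m<D+1. E m y) Opsi Us x0" by (rule acc_sum[symmetric])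
    also have "\<dots> \<le> acc (\<lambda>y. 1) Opsi Us x0"
    proof (rule acc_mono[where P=P, OF Px0])
      fix y assume "P y" thus "(\<Sum>m<D+1. E m y) \<le> 1" using Esum[of y] unfolding P_def by simp
    next
      fix y U assume "P y" "U \<in> set Us" thus "P (U *\<^sub>v (Opsi *\<^sub>v y))" by (rule pres)
    qed
    also have "\<dots> = real (length Us)" by (simp add: acc_const)
    finally show ?thesis .
  qed
  have "\<exists>m<D+1. acc (E m) Opsi Us x0 \<le> real (length Us) / (real D + 1)"
  proof (rule ccontr)
    assume "\<not> ?thesis"
    hence h: "\<And>m. m \<in> {..<D+1} \<Longrightarrow> real (length Us) / (real D + 1) < acc (E m) Opsi Us x0" by auto
    have "(\<Sum>m<D+1. real (length Us) / (real D + 1)) < (\<Sum>m<D+1. acc (E m) Opsi Us x0)"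
      by (rule sum_strict_mono) (use h in auto)
    moreover have "(\<Sum>m<D+1. real (length Us) / (real D + 1)) = real (length Us)"
    proof -
      have nz: "real D + 1 \<noteq> 0" using of_nat_0_le_iff[of D] by linarith
      have "(\<Sum>m<D+1. real (length Us) / (real D + 1)) = real (D+1) * (real (length Us) / (real D + 1))"
        by (simp only: sum_constant card_lessThan)
      also have "real (D+1) = real D + 1" by simp
      also have "(real D + 1) * (real (length Us) / (real D + 1)) = real (length Us)"
        using nz by simp
      finally show ?thesis .
    qed
    ultimately show False using accsum by linarith
  qed
  then obtain m where m1: "m \<le> D" and m2: "acc (E m) Opsi Us x0 \<le> real (length Us) / (real D + 1)"
    using less_Suc_eq_le by auto
  have OSm: "lift_oracle n w (refl_oracle (2^n) (bs m)) = OS m" by (simp add: OS_def)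
  have h1: "vnorm (final_state n w U0 Us (state_oracle (2^n) \<psi>) init - final_state n w U0 Us (refl_oracle (2^n) (bs m)) init)
      \<le> vnorm (x0 - x0) + acc (\<lambda>y. vnorm (Opsi *\<^sub>v y - OS m *\<^sub>v y)) Opsi Us x0"
    unfolding final_state_def Opsi_def[symmetric] OSm x0_def[symmetric]
  proof (rule hybrid[OF Us OS_c _ Opsi_c])
    fix y :: "complex vec" assume "dim_vec y = 2^n*2^w"
    thus "vnorm (OS m *\<^sub>v y) = vnorm y" unfolding OS_def by (rule lift_norm(1)[OF onbs[OF m1]])
  qed (use Px0 in \<open>simp_all add: P_def\<close>)
  have h2: "acc (\<lambda>y. vnorm (Opsi *\<^sub>v y - OS m *\<^sub>v y)) Opsi Us x0 = 2 * acc (\<lambda>y. sqrt (E m y)) Opsi Us x0"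
  proof -
    have "acc (\<lambda>y. vnorm (Opsi *\<^sub>v y - OS m *\<^sub>v y)) Opsi Us x0 = acc (\<lambda>y. 2 * sqrt (E m y)) Opsi Us x0"
    proof (rule acc_eq[where P=P, OF Px0])
      fix y assume "P y" thus "vnorm (Opsi *\<^sub>v y - OS m *\<^sub>v y) = 2 * sqrt (E m y)"
        unfolding P_def using diffE[OF m1] by simp
    next
      fix y U assume "P y" "U \<in> set Us" thus "P (U *\<^sub>v (Opsi *\<^sub>v y))" by (rule pres)
    qed
    thus ?thesis by (simp add: acc_cmult)
  qed
  have h3: "acc (\<lambda>y. sqrt (E m y)) Opsi Us x0 \<le> sqrt (real (length Us) * (real (length Us) / (real D + 1)))"
  proof -
    have "acc (\<lambda>y. sqrt (E m y)) Opsi Us x0 \<le> sqrt (real (length Us) * acc (E m) Opsi Us x0)"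
      by (rule acc_cs) (rule Enn)
    also have "\<dots> \<le> sqrt (real (length Us) * (real (length Us) / (real D + 1)))"
      using m2 by (intro real_sqrt_le_mono mult_left_mono) auto
    finally show ?thesis .
  qed
  have h4: "2 * sqrt (real (length Us) * (real (length Us) / (real D + 1))) \<le> 2 * real (length Us) * 2 powr (- real n / 6)"
    using final_arith[OF ev, of "real (length Us)"] unfolding D_def by simp
  have fin: "vnorm (final_state n w U0 Us (state_oracle (2^n) \<psi>) init - final_state n w U0 Us (refl_oracle (2^n) (bs m)) init)
      \<le> 2 * real (length Us) * 2 powr (- real n / 6)"
    using h1 h2 h3 h4 unfolding vnorm_zero by linarith
  show ?thesis
  proof (intro exI conjI)
    show "orthonormal_list (2^n) (bs m)" by (rule onbs[OF m1])
    show "length (bs m) = 2^(n div 2)" using lenbs[of m] unfolding D_def .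
    show "in_span \<psi> (bs m)" by (rule span)
  qed (rule fin)
qed

end
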